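(* Fix $0<p<1$ and let $\Delta\ge \frac{-\ln\left(1-\sqrt[n]{p}\right)}{\lambda}$. Then in the $\mathrm{EDD}(\lambda)$ model with a global clock, the probability that a run of the protocol $\mathrm{CORE}(\Delta)$ is correct is at least $p$.
   Context: Agents $i_0,i_1,\ldots,i_n$ share an accurate global clock and are connected by a complete reliable network; the delay of each message is an independent exponential random variable with parameter $\lambda$. At time $0$ the supervisor $i_0$ receives an external input. Protocol $\mathrm{CORE}(\Delta)$: at time $0$, $i_0$ sends a "trigger" message to each of $i_1,\ldots,i_n$; upon receiving the trigger, agent $i_k$ waits until the global time is at least $\Delta$ and then performs its action $\alpha_k$ (acting immediately if the trigger arrives after time $\Delta$). Letting $t_k$ be the time at which $i_k$ performs $\alpha_k$, a run is correct if $t_1\le t_2\le\cdots\le t_n<\infty$. *)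

theory Defs
  imports "HOL-Probability.Probability"
begin

text \<open>Protocol CORE(Delta): the trigger to agent i_k is sent at time 0 and
arrives after delay d; agent i_k acts at the first time that is at least
Delta and at least the arrival time.\<close>
definition CORE_action_time :: "real \<Rightarrow> real \<Rightarrow> real" where
  "CORE_action_time \<Delta> d = max \<Delta> d"

text \<open>A run (given delays d 1, ..., d n) is correct if t_1 \<le> t_2 \<le> ... \<le> t_n;
all action times are finite real numbers, so the condition t_n < infinity holds
automatically.\<close>
definition CORE_correct :: "nat \<Rightarrow> real \<Rightarrow> (nat \<Rightarrow> real) \<Rightarrow> bool" where
  "CORE_correct n \<Delta> d \<longleftrightarrow>
     (\<forall>k\<in>{1..<n}. CORE_action_time \<Delta> (d k) \<le> CORE_action_time \<Delta> (d (Suc k)))"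

end

theory Submission
  imports Defs
begin

theorem corollary2:
  fixes M :: "'a measure" and D :: "nat \<Rightarrow> 'a \<Rightarrow> real"
    and n :: nat and l p \<Delta> :: real
  assumes "prob_space M"
    and "n \<ge> 1"
    and "0 < l"
    and "0 < p" and "p < 1"
    and "\<Delta> \<ge> - ln (1 - root n p) / l"
    and "prob_space.indep_vars M (\<lambda>_. borel) D {1..n}"
    and "\<And>k. k \<in> {1..n} \<Longrightarrow> distributed M lborel (D k) (exponential_density l)"
  shows "prob_space.prob M {\<omega> \<in> space M. CORE_correct n \<Delta> (\<lambda>k. D k \<omega>)} \<ge> p"
proof -
  interpret prob_space M by fact
  define r where "r = root n p"
  have n0: "n > 0" using assms(2) by auto
  have r0: "0 < r" "r < 1" using assms(4,5) n0 unfolding r_def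
    by (auto simp: real_root_lt_1_iff)
  have rn: "r ^ n = p" unfolding r_def using n0 assms(4) by simp
  have lnneg: "ln (1 - r) < 0" using r0 by simp
  have lD: "- ln (1 - r) \<le> l * \<Delta>"
  proof -
    have "- (ln (1 - r) / l) \<le> \<Delta>" using assms(6) by (simp only: r_def)
    then have "(- ln (1 - r)) / l \<le> \<Delta>" by (simp only: minus_divide_left)
    then show ?thesis using assms(3) by (metis pos_divide_le_eq mult.commute)
  qed
  have D0: "0 \<le> \<Delta>"
  proof -
    have "0 < l * \<Delta>" using lD lnneg by linarith
    then show ?thesis using assms(3) by (simp add: zero_less_mult_iff)
  qed
  have "exp (- \<Delta> * l) \<le> exp (ln (1 - r))" using lD by (simp add: mult.commute)
  then have e: "exp (- \<Delta> * l) \<le> 1 - r" using r0 by simp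
  define A where "A = (\<lambda>k. {\<omega>\<in>space M. D k \<omega> \<le> \<Delta>})"
  have ind: "indep_events A {1..n}" unfolding A_def
    by (rule indep_eventsI_indep_vars[OF assms(7), where P="\<lambda>_ x. x \<le> \<Delta>"]) auto
  have meas: "\<And>k. k \<in> {1..n} \<Longrightarrow> D k \<in> borel_measurable M"
    using assms(7) unfolding indep_vars_def by auto
  have pA: "\<And>k. k \<in> {1..n} \<Longrightarrow> prob (A k) = 1 - exp (- \<Delta> * l)"
    unfolding A_def using exponential_distributedD_le[OF assms(8) D0 assms(3)] by simp
  have "prob (\<Inter>k\<in>{1..n}. A k) = (\<Prod>k\<in>{1..n}. prob (A k))"
    using ind n0 unfolding indep_events_def by auto
  also have "\<dots> = (1 - exp (- \<Delta> * l)) ^ n" using pA by simp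
  also have "\<dots> \<ge> r ^ n" using e r0 by (intro power_mono) auto
  finally have P1: "prob (\<Inter>k\<in>{1..n}. A k) \<ge> p" using rn by simp
  have sub: "(\<Inter>k\<in>{1..n}. A k) \<subseteq> {\<omega> \<in> space M. CORE_correct n \<Delta> (\<lambda>k. D k \<omega>)}"
  proof
    fix \<omega> assume w: "\<omega> \<in> (\<Inter>k\<in>{1..n}. A k)"
    then have "\<omega> \<in> A 1" using n0 by auto
    then have "\<omega> \<in> space M" by (simp add: A_def)
    moreover have "\<And>k. k \<in> {1..n} \<Longrightarrow> D k \<omega> \<le> \<Delta>" using w by (auto simp: A_def)
    ultimately show "\<omega> \<in> {\<omega> \<in> space M. CORE_correct n \<Delta> (\<lambda>k. D k \<omega>)}"
      by (auto simp: CORE_correct_def CORE_action_time_def)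
  qed
  have "{\<omega> \<in> space M. CORE_correct n \<Delta> (\<lambda>k. D k \<omega>)}
      = {\<omega> \<in> space M. \<forall>k\<in>{1..<n}. max \<Delta> (D k \<omega>) \<le> max \<Delta> (D (Suc k) \<omega>)}"
    by (simp add: CORE_correct_def CORE_action_time_def)
  also have "\<dots> \<in> events"
  proof (rule sets.sets_Collect_finite_All)
    fix k assume k: "k \<in> {1..<n}"
    then have "D k \<in> borel_measurable M" "D (Suc k) \<in> borel_measurable M" using meas by auto
    then show "{\<omega> \<in> space M. max \<Delta> (D k \<omega>) \<le> max \<Delta> (D (Suc k) \<omega>)} \<in> events"
      by measurable
  qed simp
  finally have "prob (\<Inter>k\<in>{1..n}. A k) \<le> prob {\<omega> \<in> space M. CORE_correct n \<Delta> (\<lambda>k. D k \<omega>)}"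
    using sub by (intro finite_measure_mono) auto
  then show ?thesis using P1 by simp
qed

end
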